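(* Let $G\subset\mathbb{C}^n$ be a bounded complete $n$-circled domain and let $(Q_k)_{k\in M}$ with $Q_k\in H_k(G)$ for each $k$. Then the series $\sum_{k\in M}Q_k$ converges (absolutely and uniformly on compact subsets of $G$) to an element of $H(G)$ if and only if for every $0<r<1$ there exist $C>0$ and $0<\theta<1$ such that $\|Q_k\|_{rG}\le C\theta^{|k|}$ for all $k\in M$.
   Context: A set $A\subset\mathbb{C}^n$ is complete $n$-circled if $A=\bigcup_{z\in A}\mathbb{P}_n(|z_1|,\dots,|z_n|)$, $\mathbb{P}_n(\rho)$ the open polydisc at $0$ with polyradius $\rho$. $M$ is the set of nonzero $k\in(\mathbb{N}\cup\{0\})^n$ with relatively prime coordinates; $|k|=k_1+\cdots+k_n$. $H_k(G):=\{f\in H(G): f(z)=\sum_{l\ge1}c_lz^{kl}\text{ for some }(c_l)\in\mathbb{C}^{\mathbb N}\}$. $rG=\{rz:z\in G\}$ and $\|g\|_K=\sup_K|g|$. *)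

theory Defs
  imports "HOL-Analysis.Analysis"
begin

definition polydisc :: "('n::finite \<Rightarrow> real) \<Rightarrow> (complex^'n) set" where
  "polydisc \<rho> = {w. \<forall>i. norm (w $ i) < \<rho> i}"

definition complete_circled :: "(complex^'n::finite) set \<Rightarrow> bool" where
  "complete_circled A \<longleftrightarrow> A = (\<Union>z\<in>A. polydisc (\<lambda>i. norm (z $ i)))"

definition domain :: "(complex^'n::finite) set \<Rightarrow> bool" where
  "domain G \<longleftrightarrow> open G \<and> connected G \<and> G \<noteq> {}"

definition holo_on :: "(complex^'n::finite) set \<Rightarrow> (complex^'n \<Rightarrow> complex) \<Rightarrow> bool" where
  "holo_on G f \<longleftrightarrow> (\<forall>z\<in>G. \<exists>L. (f has_derivative L) (at z) \<and> (\<forall>c w. L (c *s w) = c * L w))"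

definition H :: "(complex^'n::finite) set \<Rightarrow> (complex^'n \<Rightarrow> complex) set" where
  "H G = {f. holo_on G f}"

definition monom :: "('n::finite \<Rightarrow> nat) \<Rightarrow> complex^'n \<Rightarrow> complex" where
  "monom k z = (\<Prod>i\<in>UNIV. (z $ i) ^ k i)"

definition mlen :: "('n::finite \<Rightarrow> nat) \<Rightarrow> nat" where
  "mlen k = (\<Sum>i\<in>UNIV. k i)"

definition M :: "('n::finite \<Rightarrow> nat) set" where
  "M = {k. k \<noteq> (\<lambda>_. 0) \<and> Gcd (range k) = 1}"

definition Hk :: "('n::finite \<Rightarrow> nat) \<Rightarrow> (complex^'n) set \<Rightarrow> (complex^'n \<Rightarrow> complex) set" where
  "Hk k G = {f \<in> H G. \<exists>c::nat \<Rightarrow> complex.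
       \<forall>z\<in>G. (\<lambda>l. c (Suc l) * monom (\<lambda>i. k i * Suc l) z) sums f z}"

end

theory Submission
  imports Defs "HOL-Complex_Analysis.Complex_Analysis"
begin
no_notation fps_nth (infixl \<open>$\<close> 75)

definition Tset :: "nat \<Rightarrow> ('n::finite \<Rightarrow> nat) set" where
  "Tset N = {k. mlen k \<le> N}"

lemma box_eq: "{k::'n::finite \<Rightarrow> nat. \<forall>i. k i \<le> N} = PiE (UNIV::'n set) (\<lambda>_. {..N})"
  by (auto simp: PiE_def Pi_def extensional_def)

lemma finite_box: "finite {k::'n::finite \<Rightarrow> nat. \<forall>i. k i \<le> N}"
  unfolding box_eq by (simp add: finite_PiE)

lemma le_mlen: "k i \<le> mlen k"
  unfolding mlen_def by (rule member_le_sum) auto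

lemma finite_Tset: "finite (Tset N :: ('n::finite \<Rightarrow> nat) set)"
proof (rule finite_subset[OF _ finite_box[of N]])
  show "Tset N \<subseteq> {k::'n \<Rightarrow> nat. \<forall>i. k i \<le> N}"
    unfolding Tset_def using le_mlen order_trans by blast
qed

lemma geo_summable:
  fixes \<theta> :: real
  assumes "0 \<le> \<theta>" "\<theta> < 1"
  shows "(\<lambda>k::'n::finite \<Rightarrow> nat. \<theta> ^ mlen k) summable_on UNIV"
proof (rule nonneg_bounded_partial_sums_imp_summable_on)
  show "\<And>x. x \<in> UNIV \<Longrightarrow> 0 \<le> \<theta> ^ mlen x" using assms by simp
  let ?C = "(1 / (1 - \<theta>)) ^ CARD('n)"
  have "sum (\<lambda>k. \<theta> ^ mlen k) X \<le> ?C" if X: "finite X" for X :: "('n \<Rightarrow> nat) set"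
  proof -
    define N where "N = Max (insert 0 (mlen ` X))"
    have XB: "X \<subseteq> PiE (UNIV::'n set) (\<lambda>_. {..N})"
    proof
      fix k assume "k \<in> X"
      then have "mlen k \<le> N" unfolding N_def using X by (intro Max_ge) auto
      then have "\<forall>i. k i \<le> N" using le_mlen order_trans by blast
      then show "k \<in> PiE (UNIV::'n set) (\<lambda>_. {..N})" using box_eq[of N] by blast
    qed
    have "sum (\<lambda>k. \<theta> ^ mlen k) X \<le> sum (\<lambda>k. \<theta> ^ mlen k) (PiE (UNIV::'n set) (\<lambda>_. {..N}))"
      using sum_mono2[OF _ XB, of "\<lambda>k. \<theta> ^ mlen k"] assms by (auto simp: finite_PiE)
    also have "\<dots> = sum (\<lambda>k. \<Prod>i\<in>UNIV. \<theta> ^ k i) (PiE (UNIV::'n set) (\<lambda>_. {..N}))"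
      unfolding mlen_def by (simp add: power_sum)
    also have "\<dots> = (\<Prod>i\<in>(UNIV::'n set). \<Sum>j\<in>{..N}. \<theta> ^ j)"
      by (rule prod_sum_PiE[symmetric]) auto
    also have "\<dots> \<le> (\<Prod>i\<in>(UNIV::'n set). 1 / (1 - \<theta>))"
    proof (rule prod_mono)
      fix i :: 'n
      have "(\<Sum>j\<in>{..N}. \<theta> ^ j) \<le> (\<Sum>j. \<theta> ^ j)"
        by (rule sum_le_suminf) (use assms in \<open>auto intro: summable_geometric\<close>)
      also have "\<dots> = 1 / (1 - \<theta>)" using assms by (simp add: suminf_geometric)
      finally show "0 \<le> (\<Sum>j\<in>{..N}. \<theta> ^ j) \<and> (\<Sum>j\<in>{..N}. \<theta> ^ j) \<le> 1 / (1 - \<theta>)"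
        using assms by (auto intro: sum_nonneg)
    qed
    also have "\<dots> = ?C" by simp
    finally show ?thesis .
  qed
  then show "\<forall>\<^sub>F X in finite_subsets_at_top (UNIV::('n\<Rightarrow>nat) set). sum (\<lambda>k. \<theta> ^ mlen k) X \<le> ?C"
    unfolding eventually_finite_subsets_at_top by (intro exI[of _ "{}"]) auto
qed

lemma filterlim_Tset:
  "filterlim (\<lambda>N. A \<inter> Tset N) (finite_subsets_at_top (A :: ('n::finite \<Rightarrow> nat) set)) sequentially"
  unfolding filterlim_finite_subsets_at_top
proof (intro allI impI)
  fix X assume X: "finite X \<and> X \<subseteq> A"
  define N0 where "N0 = Max (insert 0 (mlen ` X))"
  have "X \<subseteq> Tset N" if "N \<ge> N0" for N
  proof
    fix k assume "k \<in> X"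
    then have "mlen k \<le> N0" unfolding N0_def using X by (intro Max_ge) auto
    then show "k \<in> Tset N" using that unfolding Tset_def by simp
  qed
  then show "\<forall>\<^sub>F N in sequentially. finite (A \<inter> Tset N) \<and> X \<subseteq> A \<inter> Tset N \<and> A \<inter> Tset N \<subseteq> A"
    using X finite_Tset unfolding eventually_sequentially by blast
qed

lemma has_sum_seq:
  assumes "(g has_sum s) (A :: ('n::finite \<Rightarrow> nat) set)"
  shows "(\<lambda>N. sum g (A \<inter> Tset N)) \<longlonglongrightarrow> s"
proof -
  have "(sum g \<longlongrightarrow> s) (finite_subsets_at_top A)" using assms by (simp add: has_sum_def)
  from filterlim_compose[OF this filterlim_Tset] show ?thesis by (simp add: o_def)
qed

lemma tail_tendsto:
  fixes g :: "('n::finite \<Rightarrow> nat) \<Rightarrow> 'b::{banach}"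
  assumes "g summable_on A"
  shows "(\<lambda>N. infsum g (A - Tset N)) \<longlonglongrightarrow> 0"
proof -
  have eq: "infsum g (A - Tset N) = infsum g A - sum g (A \<inter> Tset N)" for N
  proof -
    have "A - Tset N = A - (A \<inter> Tset N)" by auto
    moreover have "finite (A \<inter> Tset N)" using finite_Tset by blast
    ultimately show ?thesis using infsum_Diff[OF assms, of "A \<inter> Tset N"] by simp
  qed
  have "(\<lambda>N. sum g (A \<inter> Tset N)) \<longlonglongrightarrow> infsum g A"
    using has_sum_seq[OF has_sum_infsum[OF assms]] .
  then have "(\<lambda>N. infsum g A - sum g (A \<inter> Tset N)) \<longlonglongrightarrow> infsum g A - infsum g A"
    by (intro tendsto_intros)
  then show ?thesis by (simp add: eq)
qed

lemma tail_small:
  fixes g :: "('n::finite \<Rightarrow> nat) \<Rightarrow> real"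
  assumes "g summable_on A" "\<epsilon> > 0"
  shows "\<exists>F. finite F \<and> F \<subseteq> A \<and> infsum g (A - F) < \<epsilon>"
proof -
  from tail_tendsto[OF assms(1)] assms(2) have "\<forall>\<^sub>F N in sequentially. norm (infsum g (A - Tset N)) < \<epsilon>"
    by (simp add: tendsto_iff dist_norm)
  then obtain N where N: "norm (infsum g (A - Tset N)) < \<epsilon>" by (auto simp: eventually_sequentially)
  have "A - Tset N = A - (A \<inter> Tset N)" by auto
  with N show ?thesis using finite_Tset[of N]
    by (intro exI[of _ "A \<inter> Tset N"]) auto
qed


lemma circ_mono:
  fixes G :: "(complex^'n::finite) set"
  assumes cc: "complete_circled G" and w: "w \<in> G" and le: "\<And>i. norm (v $ i) \<le> norm (w $ i)"
  shows "v \<in> G"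
proof -
  from w cc obtain z where z: "z \<in> G" "w \<in> polydisc (\<lambda>i. norm (z $ i))"
    unfolding complete_circled_def by blast
  then have "v \<in> polydisc (\<lambda>i. norm (z $ i))"
    unfolding polydisc_def using le_less_trans[OF le] by simp
  with z(1) cc show ?thesis unfolding complete_circled_def by blast
qed

lemma circ_smult:
  fixes G :: "(complex^'n::finite) set"
  assumes "complete_circled G" "w \<in> G" "norm c \<le> 1"
  shows "c *s w \<in> G"
proof (rule circ_mono[OF assms(1,2)])
  fix i
  have "norm ((c *s w) $ i) = norm c * norm (w $ i)" by (simp add: norm_mult)
  also have "\<dots> \<le> norm (w $ i)" using assms(3) by (intro mult_left_le_one_le) auto
  finally show "norm ((c *s w) $ i) \<le> norm (w $ i)" .
qed

lemma circ_scaleR: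
  fixes G :: "(complex^'n::finite) set"
  assumes "complete_circled G" "w \<in> G" "\<bar>r\<bar> \<le> 1"
  shows "r *\<^sub>R w \<in> G"
proof (rule circ_mono[OF assms(1,2)])
  fix i
  have "norm ((r *\<^sub>R w) $ i) = \<bar>r\<bar> * norm (w $ i)" by simp
  also have "\<dots> \<le> norm (w $ i)" using assms(3) by (intro mult_left_le_one_le) auto
  finally show "norm ((r *\<^sub>R w) $ i) \<le> norm (w $ i)" .
qed

lemma rG_sub:
  fixes G :: "(complex^'n::finite) set"
  assumes cc: "complete_circled G" and r: "0 < r" "r \<le> s" "s \<le> 1"
  shows "(\<lambda>w. r *\<^sub>R w) ` G \<subseteq> (\<lambda>w. s *\<^sub>R w) ` G"
proof
  fix z assume "z \<in> (\<lambda>w. r *\<^sub>R w) ` G"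
  then obtain x where x: "x \<in> G" "z = r *\<^sub>R x" by blast
  have "(r / s) *\<^sub>R x \<in> G" using r by (intro circ_scaleR[OF cc x(1)]) auto
  moreover have "z = s *\<^sub>R ((r / s) *\<^sub>R x)" using r x by auto
  ultimately show "z \<in> (\<lambda>w. s *\<^sub>R w) ` G" by blast
qed

lemma rG_sub_G:
  fixes G :: "(complex^'n::finite) set"
  assumes cc: "complete_circled G" and r: "0 \<le> r" "r \<le> 1"
  shows "(\<lambda>w. r *\<^sub>R w) ` G \<subseteq> G"
  using circ_scaleR[OF cc] r by auto

lemma open_rG:
  fixes G :: "(complex^'n::finite) set"
  assumes "open G" "r \<noteq> 0"
  shows "open ((\<lambda>w. r *\<^sub>R w) ` G)"
  using open_scaling[OF assms(2,1)] .

lemma point_in_rG: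
  fixes G :: "(complex^'n::finite) set"
  assumes op: "open G" and z: "z \<in> G"
  shows "\<exists>r. 0 < r \<and> r < 1 \<and> z \<in> (\<lambda>w. r *\<^sub>R w) ` G"
proof -
  obtain e where e: "e > 0" "ball z e \<subseteq> G" using op z open_contains_ball by blast
  define s where "s = 1 + e / (2 * (norm z + 1))"
  have d0: "0 < 2 * (norm z + 1)" by (smt (verit) norm_ge_zero)
  have "e / (2 * (norm z + 1)) > 0" using e(1) d0 by (rule divide_pos_pos)
  then have s1: "s > 1" by (simp add: s_def)
  have "z - s *\<^sub>R z = (1 - s) *\<^sub>R z" by (simp add: algebra_simps)
  then have "dist z (s *\<^sub>R z) = (s - 1) * norm z" using s1 by (simp add: dist_norm)
  also have "\<dots> = e * norm z / (2 * (norm z + 1))" by (simp add: s_def)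
  also have "\<dots> < e"
  proof -
    have "norm z < 2 * (norm z + 1)" by (smt (verit) norm_ge_zero)
    then have "e * norm z < e * (2 * (norm z + 1))" using e by (intro mult_strict_left_mono) auto
    moreover have d: "0 < 2 * (norm z + 1)" by (smt (verit) norm_ge_zero)
    ultimately show ?thesis unfolding pos_divide_less_eq[OF d] by simp
  qed
  finally have "s *\<^sub>R z \<in> G" using e by auto
  moreover have "z = (1 / s) *\<^sub>R (s *\<^sub>R z)" using s1 by simp
  ultimately have "z \<in> (\<lambda>w. (1 / s) *\<^sub>R w) ` G" by (rule rev_image_eqI)
  then show ?thesis using s1 by (intro exI[of _ "1 / s"]) auto
qed

lemma compact_in_rG:
  fixes G :: "(complex^'n::finite) set"
  assumes op: "open G" and cc: "complete_circled G" and K: "compact K" "K \<subseteq> G"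
  shows "\<exists>r. 0 < r \<and> r < 1 \<and> K \<subseteq> (\<lambda>w. r *\<^sub>R w) ` G"
proof -
  have "K \<subseteq> (\<Union>r\<in>{0<..<1}. (\<lambda>w. r *\<^sub>R w) ` G)"
    using point_in_rG[OF op] K(2) by fastforce
  moreover have "\<And>r. r \<in> {0<..<1::real} \<Longrightarrow> open ((\<lambda>w. r *\<^sub>R w) ` G)"
    using open_rG[OF op] by auto
  ultimately obtain R where R: "R \<subseteq> {0<..<1}" "finite R" "K \<subseteq> (\<Union>r\<in>R. (\<lambda>w. r *\<^sub>R w) ` G)"
    using compactE_image[OF K(1)] by metis
  define r0 where "r0 = Max (insert (1/2) R)"
  have "1/2 \<le> r0" unfolding r0_def using R by (intro Max_ge) auto
  moreover have "r0 \<in> insert (1/2) R" unfolding r0_def using R by (intro Max_in) auto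
  ultimately have r0: "0 < r0" "r0 < 1" using R by auto
  have "(\<lambda>w. r *\<^sub>R w) ` G \<subseteq> (\<lambda>w. r0 *\<^sub>R w) ` G" if "r \<in> R" for r
    by (rule rG_sub[OF cc]) (use that R r0 in \<open>auto simp: r0_def\<close>)
  with R(3) r0 show ?thesis by (intro exI[of _ r0]) blast
qed

lemma closure_scaled:
  fixes G :: "(complex^'n::finite) set"
  assumes cc: "complete_circled G" and x: "x \<in> closure G" and r: "0 \<le> r" "r < 1"
  shows "r *\<^sub>R x \<in> G"
proof (cases "x = 0")
  case True
  from x have "G \<noteq> {}" by auto
  then obtain w where "w \<in> G" by auto
  then have "0 \<in> G" by (rule circ_mono[OF cc]) auto
  then show ?thesis using True by simp
next
  case False
  define I where "I = {i. x $ i \<noteq> 0}"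
  have I: "I \<noteq> {}" "finite I" using False unfolding I_def by (auto simp: vec_eq_iff)
  define \<eta> where "\<eta> = Min ((\<lambda>i. (1 - r) * norm (x $ i)) ` I)"
  have "\<eta> > 0" unfolding \<eta>_def using I r by (auto simp: I_def)
  with x obtain y where y: "y \<in> G" "dist y x < \<eta>" unfolding closure_approachable by blast
  show ?thesis
  proof (rule circ_mono[OF cc y(1)])
    fix i
    show "norm ((r *\<^sub>R x) $ i) \<le> norm (y $ i)"
    proof (cases "i \<in> I")
      case False then show ?thesis by (simp add: I_def)
    next
      case True
      have "norm (x $ i - y $ i) \<le> norm (x - y)"
        using Finite_Cartesian_Product.norm_nth_le[of "x - y" i] by simp
      also have "\<dots> < \<eta>" using y(2) by (simp add: dist_norm norm_minus_commute)
      also have "\<eta> \<le> (1 - r) * norm (x $ i)" unfolding \<eta>_def using I True by (intro Min_le) auto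
      finally have "norm (x $ i) - norm (y $ i) < (1 - r) * norm (x $ i)"
        using norm_triangle_ineq2[of "x $ i" "y $ i"] by linarith
      moreover have "(1 - r) * norm (x $ i) = norm (x $ i) - r * norm (x $ i)" by (simp add: algebra_simps)
      moreover have "norm ((r *\<^sub>R x) $ i) = r * norm (x $ i)" using r by simp
      ultimately show ?thesis by linarith
    qed
  qed
qed


lemma monom_smult: "monom j (c *s w) = c ^ mlen j * monom j w"
  unfolding monom_def mlen_def
  by (simp add: power_mult_distrib prod.distrib power_sum)

lemma mlen_mult: "mlen (\<lambda>i. k i * Suc l) = mlen k * Suc l"
  unfolding mlen_def by (rule sum_distrib_right[symmetric])

lemma mlen_pos: "k \<in> M \<Longrightarrow> mlen k > 0"
proof -
  assume "k \<in> M"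
  then obtain x where "k x \<noteq> 0" unfolding M_def by (auto simp: fun_eq_iff)
  then show ?thesis using le_mlen[of k x] by linarith
qed

lemma decay:
  fixes G :: "(complex^'n::finite) set" and w :: "complex^'n"
  assumes m: "mlen k > 0"
    and sums: "\<And>z. z \<in> G \<Longrightarrow> (\<lambda>l. c (Suc l) * monom (\<lambda>i. k i * Suc l) z) sums q z"
    and S: "\<And>\<mu>. norm \<mu> = 1 \<Longrightarrow> norm (q (\<mu> *s w)) \<le> S"
    and w: "\<And>\<mu>. norm \<mu> < R \<Longrightarrow> \<mu> *s w \<in> G" and R: "R > 1"
    and \<rho>: "norm \<rho> \<le> 1"
  shows "norm (q (\<rho> *s w)) \<le> norm \<rho> ^ mlen k * S"
proof -
  define m where "m = mlen k"
  define b where "b l = c (Suc l) * monom (\<lambda>i. k i * Suc l) w" for l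
  have termeq: "c (Suc l) * monom (\<lambda>i. k i * Suc l) (\<mu> *s w) = \<mu> ^ m * (b l * (\<mu> ^ m) ^ l)" for \<mu> l
  proof -
    have "\<mu> ^ (m * Suc l) = \<mu> ^ m * (\<mu> ^ m) ^ l"
      by (simp add: power_mult[symmetric] power_add[symmetric])
    then show ?thesis unfolding b_def monom_smult mlen_mult m_def by (simp add: algebra_simps)
  qed
  have sums2: "norm \<mu> < R \<Longrightarrow> (\<lambda>l. \<mu> ^ m * (b l * (\<mu> ^ m) ^ l)) sums q (\<mu> *s w)" for \<mu>
    using sums[OF w, of \<mu>] unfolding termeq .
  define t where "t = (1 + R) / 2"
  have t: "1 < t" "t < R" using R by (auto simp: t_def)
  have tm: "t ^ m > 1" using t m unfolding m_def by (simp add: one_less_power)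
  have "(\<lambda>l. complex_of_real t ^ m * (b l * (complex_of_real t ^ m) ^ l)) sums q (complex_of_real t *s w)"
    using sums2[of "complex_of_real t"] t by simp
  then have "(\<lambda>l. inverse (complex_of_real t ^ m) * (complex_of_real t ^ m * (b l * (complex_of_real t ^ m) ^ l)))
      sums (inverse (complex_of_real t ^ m) * q (complex_of_real t *s w))"
    by (rule sums_mult)
  then have summ_t: "summable (\<lambda>l. b l * (complex_of_real t ^ m) ^ l)"
    using t by (simp add: sums_summable field_simps)
  define P where "P u = (\<Sum>l. b l * u ^ l)" for u
  have Psums: "(\<lambda>l. b l * u ^ l) sums P u" if "norm u < t ^ m" for u
  proof -
    have "summable (\<lambda>l. b l * u ^ l)"
      by (rule powser_inside[OF summ_t]) (use that t in \<open>simp add: norm_power\<close>)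
    then show ?thesis unfolding P_def by (rule summable_sums)
  qed
  have Pholo: "P holomorphic_on ball 0 (t ^ m)"
    by (rule power_series_holomorphic[where a=b]) (use Psums in \<open>auto simp: dist_norm\<close>)
  define \<Phi> where "\<Phi> \<mu> = P (\<mu> ^ m)" for \<mu> :: complex
  have img: "(\<lambda>\<mu>::complex. \<mu> ^ m) ` ball 0 t \<subseteq> ball 0 (t ^ m)"
  proof
    fix u assume "u \<in> (\<lambda>\<mu>::complex. \<mu> ^ m) ` ball 0 t"
    then obtain \<mu> where "norm \<mu> < t" "u = \<mu> ^ m" by auto
    then show "u \<in> ball (0::complex) (t ^ m)" using m unfolding m_def
      by (simp add: norm_power power_strict_mono)
  qed
  have Phiholo: "\<Phi> holomorphic_on ball 0 t"
  proof -
    have "(P \<circ> (\<lambda>\<mu>::complex. \<mu> ^ m)) holomorphic_on ball 0 t"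
      by (rule holomorphic_on_compose_gen[OF _ Pholo img]) (intro holomorphic_intros)
    then show ?thesis by (simp add: \<Phi>_def[abs_def] o_def)
  qed
  have qeq: "q (\<mu> *s w) = \<mu> ^ m * \<Phi> \<mu>" if "norm \<mu> < t" for \<mu>
  proof -
    have "\<mu> \<in> ball 0 t" using that by simp
    then have "\<mu> ^ m \<in> ball 0 (t ^ m)" using img by blast
    then have "norm (\<mu> ^ m) < t ^ m" by simp
    then have "(\<lambda>l. \<mu> ^ m * (b l * (\<mu> ^ m) ^ l)) sums (\<mu> ^ m * \<Phi> \<mu>)"
      unfolding \<Phi>_def by (intro sums_mult Psums)
    moreover have "(\<lambda>l. \<mu> ^ m * (b l * (\<mu> ^ m) ^ l)) sums q (\<mu> *s w)"
      using sums2 that t by simp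
    ultimately show ?thesis by (simp add: sums_unique2)
  qed
  have sub: "cball (0::complex) 1 \<subseteq> ball 0 t" using t by auto
  have bnd: "norm (\<Phi> \<rho>) \<le> S"
  proof (rule maximum_modulus_frontier[where S="cball 0 1" and f=\<Phi> and \<xi>=\<rho>])
    show "\<Phi> holomorphic_on interior (cball 0 1)"
      using holomorphic_on_subset[OF Phiholo subset_ball[of 1 t 0]] t by simp
    show "continuous_on (closure (cball 0 1)) \<Phi>"
      using holomorphic_on_imp_continuous_on[OF Phiholo] sub by (auto intro: continuous_on_subset)
    show "bounded (cball (0::complex) 1)" by simp
    show "\<rho> \<in> cball 0 1" using \<rho> by simp
    fix z :: complex assume "z \<in> frontier (cball 0 1)"
    then have z: "norm z = 1" by simp
    then have "norm (q (z *s w)) = norm (\<Phi> z)" using qeq[of z] t by (simp add: norm_mult norm_power)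
    then show "norm (\<Phi> z) \<le> S" using S[OF z] by simp
  qed
  have "norm (q (\<rho> *s w)) = norm \<rho> ^ m * norm (\<Phi> \<rho>)"
    using qeq[of \<rho>] \<rho> t by (simp add: norm_mult norm_power)
  also have "\<dots> \<le> norm \<rho> ^ m * S" using bnd by (simp add: mult_left_mono)
  finally show ?thesis by (simp add: m_def)
qed


lemma holo_cont:
  assumes "holo_on G f" "z \<in> G"
  shows "isCont f z"
  using assms unfolding holo_on_def by (blast intro: has_derivative_continuous)

lemma single_le_infsum:
  fixes g :: "'a \<Rightarrow> real"
  assumes "g summable_on A" "\<And>x. x \<in> A \<Longrightarrow> g x \<ge> 0" "a \<in> A"
  shows "g a \<le> infsum g A"
proof -
  have "infsum g {a} \<le> infsum g A"
    by (rule infsum_mono_neutral) (use assms in auto)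
  then show ?thesis by simp
qed

lemma forward:
  fixes G :: "(complex^'n::finite) set"
    and Q :: "('n \<Rightarrow> nat) \<Rightarrow> complex^'n \<Rightarrow> complex"
  assumes dom: "domain G" and bdd: "bounded G" and cc: "complete_circled G"
    and hk: "\<forall>k\<in>M. Q k \<in> Hk k G"
    and summ: "\<forall>z\<in>G. (\<lambda>k. norm (Q k z)) summable_on M"
    and tail: "\<forall>K. compact K \<and> K \<subseteq> G \<longrightarrow>
               (\<forall>\<epsilon>>0. \<exists>F. finite F \<and> F \<subseteq> M \<and>
                  (\<forall>z\<in>K. infsum (\<lambda>k. norm (Q k z)) (M - F) < \<epsilon>))"
    and r: "0 < r" "r < 1"
  shows "\<exists>C>0. \<exists>\<theta>::real. 0 < \<theta> \<and> \<theta> < 1 \<and>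
               (\<forall>k\<in>M. \<forall>z\<in>(\<lambda>w. r *\<^sub>R w) ` G. norm (Q k z) \<le> C * \<theta> ^ mlen k)"
proof -
  define r' where "r' = (1 + r) / 2"
  have r': "r < r'" "r' < 1" "0 < r'" using r by (auto simp: r'_def)
  define \<rho> where "\<rho> = r / r'"
  have \<rho>: "0 < \<rho>" "\<rho> < 1" using r r' by (auto simp: \<rho>_def)
  define K where "K = (\<lambda>p::complex \<times> (complex^'n). fst p *s (r' *\<^sub>R snd p)) ` (cball 0 1 \<times> closure G)"
  have "compact K"
  proof -
    have eq: "(\<lambda>p::complex \<times> (complex^'n). fst p *s (r' *\<^sub>R snd p)) =
              (\<lambda>p. \<chi> i. fst p * (r' *\<^sub>R (snd p $ i)))"
      by (simp add: fun_eq_iff vec_eq_iff)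
    have "continuous_on (cball 0 1 \<times> closure G) (\<lambda>p::complex \<times> (complex^'n). fst p *s (r' *\<^sub>R snd p))"
      unfolding eq by (intro continuous_intros)
    moreover have "compact (cball (0::complex) 1 \<times> closure G)"
      using bdd by (intro compact_Times) (auto simp: compact_closure)
    ultimately show ?thesis unfolding K_def by (rule compact_continuous_image)
  qed
  have KG: "K \<subseteq> G"
  proof
    fix z assume "z \<in> K"
    then obtain \<mu> x where mx: "norm \<mu> \<le> 1" "x \<in> closure G" "z = \<mu> *s (r' *\<^sub>R x)"
      unfolding K_def by auto
    have "r' *\<^sub>R x \<in> G" using closure_scaled[OF cc mx(2)] r' by auto
    then show "z \<in> G" using circ_smult[OF cc _ mx(1)] mx(3) by auto
  qed
  have t1: "\<forall>\<epsilon>>0. \<exists>F. finite F \<and> F \<subseteq> M \<and> (\<forall>z\<in>K. infsum (\<lambda>k. norm (Q k z)) (M - F) < \<epsilon>)"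
    using tail \<open>compact K\<close> KG by blast
  obtain F where F: "finite F" "F \<subseteq> M" "\<forall>z\<in>K. infsum (\<lambda>k. norm (Q k z)) (M - F) < 1"
    using t1[rule_format, of 1] by auto
  have "\<forall>k\<in>F. \<exists>B. \<forall>z\<in>K. norm (Q k z) \<le> B"
  proof
    fix k assume "k \<in> F"
    then have "Q k \<in> H G" using hk F(2) by (auto simp: Hk_def)
    then have "\<forall>z\<in>K. isCont (Q k) z" using KG holo_cont by (auto simp: H_def)
    then have "continuous_on K (Q k)" by (rule continuous_at_imp_continuous_on)
    then have "compact (Q k ` K)" using \<open>compact K\<close> by (rule compact_continuous_image)
    then have "bounded (Q k ` K)" by (rule compact_imp_bounded)
    then obtain B0 where "\<forall>y\<in>Q k ` K. norm y \<le> B0" unfolding bounded_iff by blast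
    then show "\<exists>B. \<forall>z\<in>K. norm (Q k z) \<le> B" by auto
  qed
  from bchoice[OF this] obtain B where B: "\<forall>k\<in>F. \<forall>z\<in>K. norm (Q k z) \<le> B k" by blast
  define S0 where "S0 = 1 + (\<Sum>k\<in>F. \<bar>B k\<bar>)"
  have S0pos: "S0 > 0" unfolding S0_def by (simp add: add_pos_nonneg sum_nonneg)
  have Kbound: "norm (Q k z) \<le> S0" if "k \<in> M" "z \<in> K" for k z
  proof (cases "k \<in> F")
    case True
    have "\<bar>B k\<bar> \<le> (\<Sum>k\<in>F. \<bar>B k\<bar>)" using True F(1) by (intro member_le_sum) auto
    moreover have "norm (Q k z) \<le> B k" using B True that(2) by blast
    ultimately show ?thesis using abs_ge_self[of "B k"] unfolding S0_def by linarith
  next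
    case False
    have "(\<lambda>k. norm (Q k z)) summable_on (M - F)"
      using summ KG that(2) by (auto intro: summable_on_subset_banach)
    then have "norm (Q k z) \<le> infsum (\<lambda>k. norm (Q k z)) (M - F)"
      by (rule single_le_infsum) (use that False in auto)
    also have "\<dots> < 1" using F(3) that(2) by blast
    finally have "norm (Q k z) < 1" .
    moreover have "0 \<le> (\<Sum>k\<in>F. \<bar>B k\<bar>)" by (simp add: sum_nonneg)
    ultimately show ?thesis unfolding S0_def by linarith
  qed
  have main: "norm (Q k z) \<le> S0 * \<rho> ^ mlen k" if k: "k \<in> M" and z: "z \<in> (\<lambda>w. r *\<^sub>R w) ` G" for k z
  proof -
    obtain x where x: "x \<in> G" "z = r *\<^sub>R x" using z by auto
    obtain c where c: "\<forall>z\<in>G. (\<lambda>l. c (Suc l) * monom (\<lambda>i. k i * Suc l) z) sums Q k z"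
      using hk k by (auto simp: Hk_def)
    define w where "w = r' *\<^sub>R x"
    have smw: "\<mu> *s w = (\<mu> * complex_of_real r') *s x" for \<mu>
      by (simp add: w_def vec_eq_iff) (simp add: scaleR_conv_of_real)
    have "norm (Q k (complex_of_real \<rho> *s w)) \<le> norm (complex_of_real \<rho>) ^ mlen k * S0"
    proof (rule decay[where G=G and R="1 / r'"])
      show "0 < mlen k" using mlen_pos[OF k] .
      show "\<And>z. z \<in> G \<Longrightarrow> (\<lambda>l. c (Suc l) * monom (\<lambda>i. k i * Suc l) z) sums Q k z" using c by blast
      show "norm (Q k (\<mu> *s w)) \<le> S0" if "norm \<mu> = 1" for \<mu>
      proof (rule Kbound[OF k])
        have "(\<mu>, x) \<in> cball 0 1 \<times> closure G" using that x closure_subset by auto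
        then show "\<mu> *s w \<in> K" unfolding K_def w_def by (rule rev_image_eqI) simp
      qed
      show "\<mu> *s w \<in> G" if "norm \<mu> < 1 / r'" for \<mu>
      proof -
        have "norm (\<mu> * complex_of_real r') \<le> 1"
          using that r' by (simp add: norm_mult field_simps)
        then show ?thesis unfolding smw by (rule circ_smult[OF cc x(1)])
      qed
      show "1 < 1 / r'" using r' by simp
      show "norm (complex_of_real \<rho>) \<le> 1" using \<rho> by simp
    qed
    moreover have "complex_of_real \<rho> *s w = z"
      using r' x(2) by (simp add: w_def \<rho>_def vec_eq_iff) (simp add: scaleR_conv_of_real)
    ultimately show ?thesis using \<rho> by (simp add: mult.commute)
  qed
  show ?thesis using S0pos \<rho> main by blast
qed


lemma norm_smult_vec: "norm (c *s (x::complex^'n::finite)) = norm c * norm x"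
  unfolding norm_vec_def by (simp add: L2_set_right_distrib norm_mult)

lemma bl_smult: "bounded_linear (\<lambda>\<mu>::complex. \<mu> *s (u::complex^'n::finite))"
proof -
  have "linear (\<lambda>\<mu>::complex. \<mu> *s u)"
    by (rule linearI) (simp_all add: vec_eq_iff algebra_simps)
  then show ?thesis using linear_conv_bounded_linear by blast
qed

lemma deriv_bound:
  fixes q :: "complex^'n::finite \<Rightarrow> complex" and L :: "complex^'n \<Rightarrow> complex^'n \<Rightarrow> complex"
  assumes hol: "\<And>y. norm (y - x) < 2 * d \<Longrightarrow> (q has_derivative L y) (at y) \<and> (\<forall>c w. L y (c *s w) = c * L y w)"
    and bnd: "\<And>y. norm (y - x) < 2 * d \<Longrightarrow> norm (q y) \<le> B"
    and d: "d > 0"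
  shows "norm (L x h) \<le> B / d * norm h"
proof -
  have lin: "linear (L x)" using hol[of x] d by (auto dest: has_derivative_linear)
  show ?thesis
  proof (cases "h = 0")
    case True
    then show ?thesis using real_vector.linear_0[OF lin] by simp
  next
    case False
    define u where "u = (1 / norm h) *\<^sub>R h"
    have nu: "norm u = 1" using False by (simp add: u_def)
    have hu: "h = norm h *\<^sub>R u" using False by (simp add: u_def)
    define \<phi> where "\<phi> \<mu> = q (x + \<mu> *s u)" for \<mu>
    have dphi: "(\<phi> has_field_derivative L (x + \<mu> *s u) u) (at \<mu>)" if \<mu>: "norm \<mu> < 2 * d" for \<mu>
    proof -
      let ?y = "x + \<mu> *s u"
      have ny: "norm (?y - x) < 2 * d" using \<mu> nu by (simp add: norm_smult_vec)
      have "((\<lambda>\<mu>. \<mu> *s u) has_derivative (\<lambda>\<mu>. \<mu> *s u)) (at \<mu>)"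
        by (rule bounded_linear_imp_has_derivative[OF bl_smult])
      then have "((\<lambda>\<mu>. x + \<mu> *s u) has_derivative (\<lambda>\<mu>. \<mu> *s u)) (at \<mu>)"
        using has_derivative_add[OF has_derivative_const] by fastforce
      from diff_chain_at[OF this] hol[OF ny]
      have "((q \<circ> (\<lambda>\<mu>. x + \<mu> *s u)) has_derivative (L ?y \<circ> (\<lambda>\<mu>. \<mu> *s u))) (at \<mu>)" by blast
      moreover have "(L ?y \<circ> (\<lambda>\<mu>. \<mu> *s u)) = (*) (L ?y u)"
        using hol[OF ny] by (auto simp: fun_eq_iff mult.commute)
      ultimately show ?thesis unfolding has_field_derivative_def \<phi>_def[abs_def] o_def by simp
    qed
    have holo: "\<phi> holomorphic_on ball 0 (2 * d)"
      unfolding holomorphic_on_def field_differentiable_def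
      using dphi has_field_derivative_at_within mem_ball_0 by metis
    have "norm ((deriv ^^ 1) \<phi> 0) \<le> fact 1 * B / d ^ 1"
    proof (rule Cauchy_inequality)
      show "\<phi> holomorphic_on ball 0 d"
        by (rule holomorphic_on_subset[OF holo]) (use d in auto)
      show "continuous_on (cball 0 d) \<phi>"
        by (rule continuous_on_subset[OF holomorphic_on_imp_continuous_on[OF holo]]) (use d in auto)
      show "0 < d" by fact
      fix z :: complex assume "norm (0 - z) = d"
      then have "norm (x + z *s u - x) < 2 * d" using d nu by (simp add: norm_smult_vec)
      then show "norm (\<phi> z) \<le> B" unfolding \<phi>_def by (rule bnd)
    qed
    moreover have "deriv \<phi> 0 = L x u" using dphi[of 0] d by (simp add: DERIV_imp_deriv)
    ultimately have Lu: "norm (L x u) \<le> B / d" by simp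
    have "L x h = norm h *\<^sub>R L x u" by (subst hu) (rule linear_cmul[OF lin])
    then have "norm (L x h) = norm h * norm (L x u)" by simp
    also have "\<dots> \<le> norm h * (B / d)" using Lu norm_ge_zero[of h] by (rule mult_left_mono)
    finally show ?thesis by (simp add: mult.commute)
  qed
qed


lemma geoM:
  fixes C \<theta> :: real
  assumes "0 \<le> \<theta>" "\<theta> < 1"
  shows "(\<lambda>k::'n::finite \<Rightarrow> nat. C * \<theta> ^ mlen k) summable_on A"
proof -
  have "(\<lambda>k::'n \<Rightarrow> nat. \<theta> ^ mlen k) summable_on A"
    by (rule summable_on_subset_banach[OF geo_summable[OF assms]]) auto
  then show ?thesis by (rule summable_on_cmult_right)
qed

lemma backward:
  fixes G :: "(complex^'n::finite) set"
    and Q :: "('n \<Rightarrow> nat) \<Rightarrow> complex^'n \<Rightarrow> complex"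
  assumes dom: "domain G" and cc: "complete_circled G"
    and hk: "\<forall>k\<in>M. Q k \<in> Hk k G"
    and est: "\<forall>r::real. 0 < r \<and> r < 1 \<longrightarrow>
            (\<exists>C>0. \<exists>\<theta>::real. 0 < \<theta> \<and> \<theta> < 1 \<and>
               (\<forall>k\<in>M. \<forall>z\<in>(\<lambda>w. r *\<^sub>R w) ` G. norm (Q k z) \<le> C * \<theta> ^ mlen k))"
  shows "\<exists>f\<in>H G.
            (\<forall>z\<in>G. (\<lambda>k. norm (Q k z)) summable_on M \<and> ((\<lambda>k. Q k z) has_sum f z) M) \<and>
            (\<forall>K. compact K \<and> K \<subseteq> G \<longrightarrow>
               (\<forall>\<epsilon>>0. \<exists>F. finite F \<and> F \<subseteq> M \<and>
                  (\<forall>z\<in>K. infsum (\<lambda>k. norm (Q k z)) (M - F) < \<epsilon>)))"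
proof -
  have op: "open G" using dom by (simp add: domain_def)
  have pt: "(\<lambda>k. norm (Q k z)) summable_on M" if z: "z \<in> G" for z
  proof -
    obtain r where r: "0 < r" "r < 1" "z \<in> (\<lambda>w. r *\<^sub>R w) ` G" using point_in_rG[OF op z] by blast
    obtain C \<theta> where C: "C > 0" "0 < \<theta>" "\<theta> < 1"
      "\<forall>k\<in>M. \<forall>z\<in>(\<lambda>w. r *\<^sub>R w) ` G. norm (Q k z) \<le> C * \<theta> ^ mlen k"
      using est r(1,2) by blast
    show ?thesis
      by (rule summable_on_comparison_test[OF geoM[of \<theta> C M]]) (use C r in auto)
  qed
  define f where "f z = infsum (\<lambda>k. Q k z) M" for z
  have hs: "((\<lambda>k. Q k z) has_sum f z) M" if "z \<in> G" for z
    unfolding f_def by (rule has_sum_infsum, rule abs_summable_summable, rule pt[OF that])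
  have tl: "\<exists>F. finite F \<and> F \<subseteq> M \<and> (\<forall>z\<in>K. infsum (\<lambda>k. norm (Q k z)) (M - F) < \<epsilon>)"
    if K: "compact K" "K \<subseteq> G" and e: "\<epsilon> > 0" for K \<epsilon>
  proof -
    obtain r where r: "0 < r" "r < 1" "K \<subseteq> (\<lambda>w. r *\<^sub>R w) ` G" using compact_in_rG[OF op cc K] by blast
    obtain C \<theta> where C: "C > 0" "0 < \<theta>" "\<theta> < 1"
      "\<forall>k\<in>M. \<forall>z\<in>(\<lambda>w. r *\<^sub>R w) ` G. norm (Q k z) \<le> C * \<theta> ^ mlen k"
      using est r(1,2) by blast
    obtain F :: "('n \<Rightarrow> nat) set" where F: "finite F" "F \<subseteq> M" "infsum (\<lambda>k. C * \<theta> ^ mlen k) (M - F) < \<epsilon>"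
      using tail_small[OF geoM[of \<theta> C M] e] C by auto
    have "infsum (\<lambda>k. norm (Q k z)) (M - F) < \<epsilon>" if z: "z \<in> K" for z
    proof -
      have zG: "z \<in> G" using z K(2) by auto
      have "infsum (\<lambda>k. norm (Q k z)) (M - F) \<le> infsum (\<lambda>k. C * \<theta> ^ mlen k) (M - F)"
      proof (rule infsum_mono)
        show "(\<lambda>k. norm (Q k z)) summable_on M - F"
          by (rule summable_on_subset_banach[OF pt[OF zG]]) auto
        show "(\<lambda>k. C * \<theta> ^ mlen k) summable_on M - F" using C by (intro geoM) auto
        show "\<And>k. k \<in> M - F \<Longrightarrow> norm (Q k z) \<le> C * \<theta> ^ mlen k" using C r z by auto
      qed
      then show ?thesis using F(3) by linarith
    qed
    then show ?thesis using F by blast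
  qed
  have holo: "holo_on G f" unfolding holo_on_def
  proof
    fix z0 assume z0: "z0 \<in> G"
    obtain r where r: "0 < r" "r < 1" "z0 \<in> (\<lambda>w. r *\<^sub>R w) ` G" using point_in_rG[OF op z0] by blast
    define U where "U = (\<lambda>w. r *\<^sub>R w) ` G"
    have "open U" unfolding U_def using open_rG[OF op] r by auto
    then obtain e where e: "e > 0" "ball z0 e \<subseteq> U" using r(3) unfolding U_def by (meson open_contains_ball)
    have UG: "U \<subseteq> G" unfolding U_def using rG_sub_G[OF cc] r by auto
    define \<delta> where "\<delta> = e / 3"
    have \<delta>: "\<delta> > 0" using e by (simp add: \<delta>_def)
    obtain C \<theta> where C: "C > 0" "0 < \<theta>" "\<theta> < 1"
      "\<forall>k\<in>M. \<forall>z\<in>U. norm (Q k z) \<le> C * \<theta> ^ mlen k"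
      using est r(1,2) unfolding U_def by blast
    define D where "D k x = (SOME L. (Q k has_derivative L) (at x) \<and> (\<forall>c w. L (c *s w) = c * L w))" for k x
    have Dp: "(Q k has_derivative D k x) (at x) \<and> (\<forall>c w. D k x (c *s w) = c * D k x w)"
      if "k \<in> M" "x \<in> G" for k x
    proof -
      have "holo_on G (Q k)" using hk that(1) by (auto simp: Hk_def H_def)
      then have "\<exists>L. (Q k has_derivative L) (at x) \<and> (\<forall>c w. L (c *s w) = c * L w)"
        using that(2) unfolding holo_on_def by blast
      then show ?thesis unfolding D_def by (rule someI_ex)
    qed
    define S where "S = ball z0 \<delta>"
    have DB: "norm (D k x h) \<le> (C * norm h / \<delta>) * \<theta> ^ mlen k" if k: "k \<in> M" and x: "x \<in> S" for k x h
    proof -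
      have inU: "y \<in> U" if "norm (y - x) < 2 * \<delta>" for y
      proof -
        have "dist z0 y \<le> dist z0 x + dist x y" by (rule dist_triangle)
        also have "\<dots> < \<delta> + 2 * \<delta>" using x that by (simp add: S_def dist_norm norm_minus_commute add_strict_mono)
        finally have "y \<in> ball z0 e" by (simp add: \<delta>_def)
        then show ?thesis using e by auto
      qed
      have "norm (D k x h) \<le> (C * \<theta> ^ mlen k) / \<delta> * norm h"
      proof (rule deriv_bound[where q="Q k"])
        show "\<And>y. norm (y - x) < 2 * \<delta> \<Longrightarrow> (Q k has_derivative D k y) (at y) \<and> (\<forall>c w. D k y (c *s w) = c * D k y w)"
          using Dp[OF k] inU UG by blast
        show "\<And>y. norm (y - x) < 2 * \<delta> \<Longrightarrow> norm (Q k y) \<le> C * \<theta> ^ mlen k"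
          using C(4) k inU by blast
        show "\<delta> > 0" by fact
      qed
      then show ?thesis by (simp add: field_simps)
    qed
    have "S \<subseteq> ball z0 e" unfolding S_def \<delta>_def using e by (intro subset_ball) simp
    then have SG: "S \<subseteq> G" using e UG by blast
    have z0S: "z0 \<in> S" using \<delta> by (simp add: S_def)
    have Dsumm: "(\<lambda>k. norm (D k x h)) summable_on A" if "x \<in> S" "A \<subseteq> M" for x h A
      by (rule summable_on_comparison_test[OF geoM[of \<theta> "C * norm h / \<delta>" A]])
         (use C DB that in auto)
    define fN where "fN N x = (\<Sum>k\<in>M \<inter> Tset N. Q k x)" for N x
    define fN' where "fN' N x = (\<lambda>h. \<Sum>k\<in>M \<inter> Tset N. D k x h)" for N x
    define g' where "g' x = (\<lambda>h. infsum (\<lambda>k. D k x h) M)" for x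
    have derf: "(fN N has_derivative fN' N x) (at x within S)" if "x \<in> S" for N x
    proof -
      have "(fN N has_derivative fN' N x) (at x)"
        unfolding fN_def[abs_def] fN'_def
        by (rule has_derivative_sum) (use Dp SG that in blast)
      then show ?thesis by (rule has_derivative_subset) auto
    qed
    have nle: "\<forall>\<^sub>F N in sequentially. \<forall>x\<in>S. \<forall>h. norm (fN' N x h - g' x h) \<le> \<epsilon> * norm h"
      if \<epsilon>: "\<epsilon> > 0" for \<epsilon>
    proof -
      define \<eta> where "\<eta> = \<epsilon> * \<delta> / C"
      have \<eta>: "\<eta> > 0" using \<epsilon> \<delta> C by (simp add: \<eta>_def)
      have "(\<lambda>N. infsum (\<lambda>k::'n\<Rightarrow>nat. \<theta> ^ mlen k) (M - Tset N)) \<longlonglongrightarrow> 0"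
        by (rule tail_tendsto) (use geoM[of \<theta> 1 M] C in simp)
      then have ev: "\<forall>\<^sub>F N in sequentially. norm (infsum (\<lambda>k::'n\<Rightarrow>nat. \<theta> ^ mlen k) (M - Tset N)) < \<eta>"
        using \<eta> by (simp add: tendsto_iff dist_norm)
      show ?thesis
      proof (rule eventually_mono[OF ev], intro ballI allI)
        fix N x h assume N: "norm (infsum (\<lambda>k::'n\<Rightarrow>nat. \<theta> ^ mlen k) (M - Tset N)) < \<eta>" and x: "x \<in> S"
        have sD: "(\<lambda>k. D k x h) summable_on M"
          by (rule abs_summable_summable, rule Dsumm[OF x]) auto
        have eqT: "M - Tset N = M - (M \<inter> Tset N)" by auto
        have finT: "finite (M \<inter> Tset N)" using finite_Tset by blast
        have "fN' N x h - g' x h = - infsum (\<lambda>k. D k x h) (M - Tset N)"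
        proof -
          have i1: "infsum (\<lambda>k. D k x h) (M - (M \<inter> Tset N)) = infsum (\<lambda>k. D k x h) M - sum (\<lambda>k. D k x h) (M \<inter> Tset N)"
            using infsum_Diff[OF sD summable_on_finite[OF finT]] infsum_finite[OF finT] by simp
          show ?thesis unfolding fN'_def g'_def eqT i1 by simp
        qed
        then have "norm (fN' N x h - g' x h) = norm (infsum (\<lambda>k. D k x h) (M - Tset N))" by simp
        also have "\<dots> \<le> infsum (\<lambda>k. norm (D k x h)) (M - Tset N)"
          by (rule norm_infsum_bound, rule Dsumm[OF x]) auto
        also have "\<dots> \<le> infsum (\<lambda>k::'n\<Rightarrow>nat. (C * norm h / \<delta>) * \<theta> ^ mlen k) (M - Tset N)"
        proof (rule infsum_mono)
          show "(\<lambda>k. norm (D k x h)) summable_on M - Tset N" by (rule Dsumm[OF x]) auto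
          show "(\<lambda>k::'n\<Rightarrow>nat. (C * norm h / \<delta>) * \<theta> ^ mlen k) summable_on M - Tset N" using C by (intro geoM) auto
          show "\<And>k. k \<in> M - Tset N \<Longrightarrow> norm (D k x h) \<le> (C * norm h / \<delta>) * \<theta> ^ mlen k"
            using DB x by auto
        qed
        also have "\<dots> = (C * norm h / \<delta>) * infsum (\<lambda>k::'n\<Rightarrow>nat. \<theta> ^ mlen k) (M - Tset N)"
          by (rule infsum_cmult_right')
        also have "\<dots> \<le> (C * norm h / \<delta>) * \<eta>"
        proof (rule mult_left_mono)
          show "infsum (\<lambda>k::'n\<Rightarrow>nat. \<theta> ^ mlen k) (M - Tset N) \<le> \<eta>" using N by simp
          show "0 \<le> C * norm h / \<delta>" using C \<delta> by simp
        qed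
        also have "\<dots> = \<epsilon> * norm h" using C \<delta> by (simp add: \<eta>_def field_simps)
        finally show "norm (fN' N x h - g' x h) \<le> \<epsilon> * norm h" .
      qed
    qed
    have lim: "(\<lambda>N. fN N z0) \<longlonglongrightarrow> f z0"
      unfolding fN_def by (rule has_sum_seq[OF hs[OF z0]])
    obtain g where g: "\<forall>x\<in>S. (\<lambda>N. fN N x) \<longlonglongrightarrow> g x \<and> (g has_derivative g' x) (at x within S)"
      using has_derivative_sequence[OF convex_ball[of z0 \<delta>, folded S_def] derf nle z0S lim] by blast
    have gf: "g x = f x" if "x \<in> S" for x
    proof -
      have "(\<lambda>N. fN N x) \<longlonglongrightarrow> f x"
        unfolding fN_def by (rule has_sum_seq[OF hs]) (use SG that in auto)
      then show ?thesis using g that LIMSEQ_unique by blast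
    qed
    have "(g has_derivative g' z0) (at z0 within S)" using g z0S by blast
    moreover have "at z0 within S = at z0" by (rule at_within_open[OF z0S]) (simp add: S_def)
    ultimately have "(g has_derivative g' z0) (at z0)" by simp
    then have fd: "(f has_derivative g' z0) (at z0)"
      by (rule has_derivative_transform_within_open[where s=S]) (use gf z0S in \<open>auto simp: S_def\<close>)
    have cl: "\<forall>c w. g' z0 (c *s w) = c * g' z0 w"
    proof (intro allI)
      fix c w
      have "g' z0 (c *s w) = infsum (\<lambda>k. c * D k z0 w) M"
        unfolding g'_def using Dp z0 by (intro infsum_cong) auto
      also have "\<dots> = c * g' z0 w" unfolding g'_def by (rule infsum_cmult_right')
      finally show "g' z0 (c *s w) = c * g' z0 w" .
    qed
    show "\<exists>L. (f has_derivative L) (at z0) \<and> (\<forall>c w. L (c *s w) = c * L w)"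
      using fd cl by blast
  qed
  show ?thesis
  proof (rule bexI[of _ f])
    show "f \<in> H G" using holo by (simp add: H_def)
    show "(\<forall>z\<in>G. (\<lambda>k. norm (Q k z)) summable_on M \<and> ((\<lambda>k. Q k z) has_sum f z) M) \<and>
            (\<forall>K. compact K \<and> K \<subseteq> G \<longrightarrow>
               (\<forall>\<epsilon>>0. \<exists>F. finite F \<and> F \<subseteq> M \<and>
                  (\<forall>z\<in>K. infsum (\<lambda>k. norm (Q k z)) (M - F) < \<epsilon>)))"
      using pt hs tl by blast
  qed
qed

theorem corollary4p6:
  fixes G :: "(complex^'n::finite) set"
    and Q :: "('n \<Rightarrow> nat) \<Rightarrow> complex^'n \<Rightarrow> complex"
  assumes "domain G" and "bounded G" and "complete_circled G"
    and "\<forall>k\<in>M. Q k \<in> Hk k G"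
  shows "(\<exists>f\<in>H G.
            (\<forall>z\<in>G. (\<lambda>k. norm (Q k z)) summable_on M \<and> ((\<lambda>k. Q k z) has_sum f z) M) \<and>
            (\<forall>K. compact K \<and> K \<subseteq> G \<longrightarrow>
               (\<forall>\<epsilon>>0. \<exists>F. finite F \<and> F \<subseteq> M \<and>
                  (\<forall>z\<in>K. infsum (\<lambda>k. norm (Q k z)) (M - F) < \<epsilon>))))
         \<longleftrightarrow>
         (\<forall>r::real. 0 < r \<and> r < 1 \<longrightarrow>
            (\<exists>C>0. \<exists>\<theta>::real. 0 < \<theta> \<and> \<theta> < 1 \<and>
               (\<forall>k\<in>M. \<forall>z\<in>(\<lambda>w. r *\<^sub>R w) ` G. norm (Q k z) \<le> C * \<theta> ^ mlen k)))"
proof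
  assume L: "\<exists>f\<in>H G.
            (\<forall>z\<in>G. (\<lambda>k. norm (Q k z)) summable_on M \<and> ((\<lambda>k. Q k z) has_sum f z) M) \<and>
            (\<forall>K. compact K \<and> K \<subseteq> G \<longrightarrow>
               (\<forall>\<epsilon>>0. \<exists>F. finite F \<and> F \<subseteq> M \<and>
                  (\<forall>z\<in>K. infsum (\<lambda>k. norm (Q k z)) (M - F) < \<epsilon>)))"
  then have summ: "\<forall>z\<in>G. (\<lambda>k. norm (Q k z)) summable_on M"
    and tail: "\<forall>K. compact K \<and> K \<subseteq> G \<longrightarrow>
               (\<forall>\<epsilon>>0. \<exists>F. finite F \<and> F \<subseteq> M \<and>
                  (\<forall>z\<in>K. infsum (\<lambda>k. norm (Q k z)) (M - F) < \<epsilon>))"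
    by blast+
  show "\<forall>r::real. 0 < r \<and> r < 1 \<longrightarrow>
            (\<exists>C>0. \<exists>\<theta>::real. 0 < \<theta> \<and> \<theta> < 1 \<and>
               (\<forall>k\<in>M. \<forall>z\<in>(\<lambda>w. r *\<^sub>R w) ` G. norm (Q k z) \<le> C * \<theta> ^ mlen k))"
  proof (intro allI impI)
    fix r :: real assume "0 < r \<and> r < 1"
    then show "\<exists>C>0. \<exists>\<theta>::real. 0 < \<theta> \<and> \<theta> < 1 \<and>
               (\<forall>k\<in>M. \<forall>z\<in>(\<lambda>w. r *\<^sub>R w) ` G. norm (Q k z) \<le> C * \<theta> ^ mlen k)"
      using forward[OF assms summ tail] by blast
  qed
next
  assume R: "\<forall>r::real. 0 < r \<and> r < 1 \<longrightarrow>
            (\<exists>C>0. \<exists>\<theta>::real. 0 < \<theta> \<and> \<theta> < 1 \<and>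
               (\<forall>k\<in>M. \<forall>z\<in>(\<lambda>w. r *\<^sub>R w) ` G. norm (Q k z) \<le> C * \<theta> ^ mlen k))"
  show "\<exists>f\<in>H G.
            (\<forall>z\<in>G. (\<lambda>k. norm (Q k z)) summable_on M \<and> ((\<lambda>k. Q k z) has_sum f z) M) \<and>
            (\<forall>K. compact K \<and> K \<subseteq> G \<longrightarrow>
               (\<forall>\<epsilon>>0. \<exists>F. finite F \<and> F \<subseteq> M \<and>
                  (\<forall>z\<in>K. infsum (\<lambda>k. norm (Q k z)) (M - F) < \<epsilon>)))"
    by (rule backward[OF assms(1,3,4) R])
qed

end
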